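(* Let $a>1$ be an integer that is a zero divisor in $\mathbb{Z}/m\mathbb{Z}$, let $k\ge 1$ with $a^k\mid m$, and let $(K_n,\alpha)$ be an edge-labeled complete graph over $\mathbb{Z}/m\mathbb{Z}$ with ordered edge labels $a^{i_1},a^{i_2},\dots,a^{i_{r_n}}$. (1) If $a^{i_{r_n}}\mid a^{i_{r_n-1}}\mid\cdots\mid a^{i_2}\mid a^{i_1}\mid a^k$ with $i_{r_n}\ge1$ and $i_1<k$, then the set consisting of $(1,\dots,1)$ together with, for each $j=2,\dots,n$, the vector with $a^{i_{r_{j-1}+1}}$ at $v_j$ and $0$ elsewhere, is a minimum flow-up generating set of $[\mathbb{Z}/m\mathbb{Z}]_{(K_n,\alpha)}$; thus the rank is $n$. (2) If $a^{i_1}\mid a^{i_2}\mid\cdots\mid a^{i_{r_n}}\mid a^k$ with $i_1\ge1$ and $i_{r_n}<k$, then the set consisting of $(1,\dots,1)$ together with, for each $j=2,\dots,n$, the vector with entries $a^{i_{r_n-(n-j)}}$ at $v_j,\dots,v_n$ and $0$ at $v_1,\dots,v_{j-1}$, is a minimum flow-up generating set of $[\mathbb{Z}/m\mathbb{Z}]_{(K_n,\alpha)}$; thus the rank is $n$.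
   Context: A spline on an edge-labeled graph $(G,\alpha)$ over $\mathbb{Z}/m\mathbb{Z}$ (edges labeled by nonzero ideals) is a vector $(f_{v_1},\dots,f_{v_n})\in(\mathbb{Z}/m\mathbb{Z})^n$ with $f_{v_i}-f_{v_j}\in\alpha(v_iv_j)$ for every edge; the splines form a $\mathbb{Z}$-module $[\mathbb{Z}/m\mathbb{Z}]_{(G,\alpha)}$. An $i$-th flow-up class is a spline with $f_{v_i}\ne0$ and $f_{v_t}=0$ for $t<i$. A minimum generating set is a generating set of the $\mathbb{Z}$-module of smallest size (the rank); a minimum flow-up generating set is one consisting of flow-up classes. $K_n$ is the complete graph on $v_1,\dots,v_n$; $r_k=k(k-1)/2$; for $1\le j<k\le n$ the edge $v_jv_k$ is $e_{r_{k-1}+j}$. "Ordered edge labels $l_1,\dots,l_{r_n}$" means $\alpha(e_s)$ is the ideal generated by $l_s+m\mathbb{Z}$. Vectors are written $(f_{v_1},\dots,f_{v_n})$. *)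

theory Defs
  imports "HOL-Number_Theory.Cong"
begin

text \<open>Elements of Z/mZ are represented by their canonical residues in {0..<m};
  a vector (f_{v_1},...,f_{v_n}) is a list of length n (vertex v_i is list index i-1).\<close>

definition r :: "nat \<Rightarrow> nat" where
  "r k = k * (k - 1) div 2"

text \<open>Edge v_j v_k (j<k) of K_n is e_{r(k-1)+j}; its label is the ideal generated by l(r(k-1)+j) + mZ.\<close>

definition vec_mod :: "int \<Rightarrow> nat \<Rightarrow> int list set" where
  "vec_mod m n = {f. length f = n \<and> (\<forall>x\<in>set f. 0 \<le> x \<and> x < m)}"

definition splines :: "int \<Rightarrow> nat \<Rightarrow> (nat \<Rightarrow> int) \<Rightarrow> int list set" where
  "splines m n l = {f \<in> vec_mod m n.
     \<forall>j k. 1 \<le> j \<and> j < k \<and> k \<le> n \<longrightarrow>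
       (\<exists>c. [f ! (j - 1) - f ! (k - 1) = c * l (r (k - 1) + j)] (mod m))}"

definition zspan :: "int \<Rightarrow> nat \<Rightarrow> int list set \<Rightarrow> int list set" where
  "zspan m n S = {f \<in> vec_mod m n. \<exists>F c. finite F \<and> F \<subseteq> S \<and>
       (\<forall>i<n. [f ! i = (\<Sum>g\<in>F. c g * g ! i)] (mod m))}"

definition is_gen_set :: "int \<Rightarrow> nat \<Rightarrow> (nat \<Rightarrow> int) \<Rightarrow> int list set \<Rightarrow> bool" where
  "is_gen_set m n l S \<longleftrightarrow> S \<subseteq> splines m n l \<and> splines m n l \<subseteq> zspan m n S"

definition is_min_gen_set :: "int \<Rightarrow> nat \<Rightarrow> (nat \<Rightarrow> int) \<Rightarrow> int list set \<Rightarrow> bool" where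
  "is_min_gen_set m n l S \<longleftrightarrow> is_gen_set m n l S \<and> finite S \<and>
     (\<forall>S'. is_gen_set m n l S' \<and> finite S' \<longrightarrow> card S \<le> card S')"

definition spline_rank :: "int \<Rightarrow> nat \<Rightarrow> (nat \<Rightarrow> int) \<Rightarrow> nat" where
  "spline_rank m n l = (LEAST c. \<exists>S. is_gen_set m n l S \<and> finite S \<and> card S = c)"

definition is_flow_up :: "int \<Rightarrow> nat \<Rightarrow> (nat \<Rightarrow> int) \<Rightarrow> nat \<Rightarrow> int list \<Rightarrow> bool" where
  "is_flow_up m n l i f \<longleftrightarrow> f \<in> splines m n l \<and> 1 \<le> i \<and> i \<le> n \<and>
     f ! (i - 1) \<noteq> 0 \<and> (\<forall>t. 1 \<le> t \<and> t < i \<longrightarrow> f ! (t - 1) = 0)"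

definition is_min_flow_up_gen_set :: "int \<Rightarrow> nat \<Rightarrow> (nat \<Rightarrow> int) \<Rightarrow> int list set \<Rightarrow> bool" where
  "is_min_flow_up_gen_set m n l S \<longleftrightarrow> is_min_gen_set m n l S \<and>
     (\<forall>f\<in>S. \<exists>i. is_flow_up m n l i f)"

definition zero_divisor_mod :: "int \<Rightarrow> int \<Rightarrow> bool" where
  "zero_divisor_mod m a \<longleftrightarrow> \<not> [a = 0] (mod m) \<and> (\<exists>b. \<not> [b = 0] (mod m) \<and> [a * b = 0] (mod m))"

end

theory Submission
  imports Defs "HOL-Library.FuncSet"
begin


lemma r_Suc: "r (Suc p) = r p + p"
proof -
  have "Suc p * p = p*(p-1) + 2*p" by (cases p) (auto simp: algebra_simps)
  then show ?thesis unfolding r_def by simp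
qed

lemma r_mono: "p \<le> q \<Longrightarrow> r p \<le> r q"
  unfolding r_def by (intro div_le_mono mult_le_mono diff_le_mono) auto

lemma r_pred: "1 \<le> n \<Longrightarrow> r n = r (n - 1) + (n - 1)"
  using r_Suc[of "n-1"] by simp

lemma edge_idx: "1 \<le> j \<Longrightarrow> j < k \<Longrightarrow> k \<le> n \<Longrightarrow> 1 \<le> r (k - 1) + j \<and> r (k - 1) + j \<le> r n"
proof -
  assume h: "1 \<le> j" "j < k" "k \<le> n"
  have "r k = r (k-1) + (k-1)" using r_pred[of k] h by simp
  moreover have "r k \<le> r n" using r_mono h by simp
  ultimately show ?thesis using h by simp
qed

lemma pow_dvd_le:
  fixes a :: int assumes "a > 1" "a ^ x dvd a ^ y" shows "x \<le> y"
proof (rule ccontr)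
  assume "\<not> x \<le> y"
  then have "a ^ x = a ^ y * a ^ (x - y)" by (simp add: power_add[symmetric])
  with assms have "a ^ y * a ^ (x - y) dvd a ^ y * 1" by simp
  then have "a ^ (x - y) dvd 1" using assms by (subst (asm) dvd_mult_cancel_left) auto
  moreover have "a ^ (x - y) \<ge> a" using assms \<open>\<not> x \<le> y\<close>
    by (intro self_le_power) auto
  ultimately show False using assms by (auto dest: zdvd_imp_le)
qed

lemma antitone_from_step:
  fixes e :: "nat \<Rightarrow> nat"
  assumes "\<forall>s. 1 \<le> s \<and> s < N \<longrightarrow> e (s+1) \<le> e s"
  shows "1 \<le> s \<Longrightarrow> s \<le> t \<Longrightarrow> t \<le> N \<Longrightarrow> e t \<le> e s"
proof (induction t)
  case 0 then show ?case by simp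
next
  case (Suc t)
  show ?case
  proof (cases "s = Suc t")
    case False
    then have "s \<le> t" using Suc by simp
    then have "e t \<le> e s" using Suc by simp
    moreover have "e (t+1) \<le> e t" using assms Suc \<open>s \<le> t\<close> by simp
    ultimately show ?thesis by simp
  qed simp
qed

lemma mono_from_step:
  fixes e :: "nat \<Rightarrow> nat"
  assumes "\<forall>s. 1 \<le> s \<and> s < N \<longrightarrow> e s \<le> e (s+1)"
  shows "1 \<le> s \<Longrightarrow> s \<le> t \<Longrightarrow> t \<le> N \<Longrightarrow> e s \<le> e t"
proof (induction t)
  case 0 then show ?case by simp
next
  case (Suc t)
  show ?case
  proof (cases "s = Suc t")
    case False
    then have "s \<le> t" using Suc by simp
    then have "e s \<le> e t" using Suc by simp
    moreover have "e t \<le> e (t+1)" using assms Suc \<open>s \<le> t\<close> by simp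
    ultimately show ?thesis by simp
  qed simp
qed

lemma dvd_cong_ex: "(L::int) dvd x \<Longrightarrow> \<exists>c. [x = c * L] (mod m)"
proof -
  assume "L dvd x" then obtain q where "x = L * q" by (auto simp: dvd_def)
  then have "[x = q * L] (mod m)" by (simp add: mult.commute)
  then show ?thesis by blast
qed

lemma small_eq: "0 \<le> (u::int) \<Longrightarrow> u < a \<Longrightarrow> 0 \<le> v \<Longrightarrow> v < a \<Longrightarrow> a dvd u - v \<Longrightarrow> u = v"
proof -
  assume h: "0 \<le> u" "u < a" "0 \<le> v" "v < a" "a dvd u - v"
  then obtain q where q: "u - v = a * q" by (auto simp: dvd_def)
  have "q = 0"
  proof (rule ccontr)
    assume "q \<noteq> 0"
    then have "\<bar>a * q\<bar> \<ge> a" using h by (simp add: abs_mult)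
    then show False using q h by simp
  qed
  then show ?thesis using q by simp
qed

lemma key_cancel:
  fixes u v a B c m :: int
  assumes "[(u - v) * B = a * c * B] (mod m)" "a * B dvd m" "B \<noteq> 0"
    "0 \<le> u" "u < a" "0 \<le> v" "v < a"
  shows "u = v"
proof -
  have "[(u - v) * B = a * c * B] (mod a * B)" using assms cong_dvd_modulus by blast
  then have "a * B dvd (u - v - a * c) * B" by (simp add: cong_iff_dvd_diff algebra_simps)
  then have "a dvd u - v - a * c" using assms by simp
  then have "a dvd u - v" by (metis dvd_diff_right_iff dvd_triv_left diff_add_cancel dvd_add)
  then show ?thesis using small_eq assms by blast
qed



definition edgeok :: "int \<Rightarrow> nat \<Rightarrow> (nat \<Rightarrow> int) \<Rightarrow> int list \<Rightarrow> bool" where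
  "edgeok m n l f \<longleftrightarrow> (\<forall>j k. 1 \<le> j \<and> j < k \<and> k \<le> n \<longrightarrow>
       (\<exists>c. [f ! (j - 1) - f ! (k - 1) = c * l (r (k - 1) + j)] (mod m)))"

lemma splines_iff: "f \<in> splines m n l \<longleftrightarrow> f \<in> vec_mod m n \<and> edgeok m n l f"
  unfolding splines_def edgeok_def by simp

lemma edgeok_comb:
  assumes "finite G" "\<forall>g\<in>G. edgeok m n l g"
    and "\<forall>i<n. [F ! i = (\<Sum>g\<in>G. t g * g ! i)] (mod m)"
  shows "edgeok m n l F"
  unfolding edgeok_def
proof (intro allI impI)
  fix j k assume jk: "1 \<le> j \<and> j < k \<and> k \<le> n"
  let ?L = "l (r (k - 1) + j)"
  have "\<forall>g\<in>G. \<exists>c. [g ! (j - 1) - g ! (k - 1) = c * ?L] (mod m)"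
    using assms(2) jk unfolding edgeok_def by blast
  then have "\<exists>C. \<forall>g\<in>G. [g ! (j - 1) - g ! (k - 1) = C g * ?L] (mod m)" by (rule bchoice)
  then obtain C where C: "\<forall>g\<in>G. [g ! (j - 1) - g ! (k - 1) = C g * ?L] (mod m)"
    by blast
  have "[F ! (j - 1) - F ! (k - 1) = (\<Sum>g\<in>G. t g * g ! (j-1)) - (\<Sum>g\<in>G. t g * g ! (k-1))] (mod m)"
    using assms(3) jk by (intro cong_diff) auto
  also have "(\<Sum>g\<in>G. t g * g ! (j-1)) - (\<Sum>g\<in>G. t g * g ! (k-1)) = (\<Sum>g\<in>G. t g * (g ! (j-1) - g ! (k-1)))"
    by (simp add: sum_subtractf algebra_simps)
  also have "[\<dots> = (\<Sum>g\<in>G. t g * (C g * ?L))] (mod m)"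
    using C by (intro cong_sum cong_mult cong_refl) auto
  also have "(\<Sum>g\<in>G. t g * (C g * ?L)) = (\<Sum>g\<in>G. t g * C g) * ?L"
    by (simp add: sum_distrib_right algebra_simps)
  finally show "\<exists>c. [F ! (j - 1) - F ! (k - 1) = c * ?L] (mod m)" by blast
qed

lemma zspan_sumS:
  assumes "f \<in> zspan m n S" "finite S"
  shows "\<exists>c. \<forall>i<n. [f ! i = (\<Sum>g\<in>S. c g * g ! i)] (mod m)"
proof -
  obtain F c where F: "finite F" "F \<subseteq> S" "\<forall>i<n. [f ! i = (\<Sum>g\<in>F. c g * g ! i)] (mod m)"
    using assms unfolding zspan_def by blast
  let ?c = "\<lambda>g. if g \<in> F then c g else 0"
  have "\<forall>i<n. (\<Sum>g\<in>S. ?c g * g ! i) = (\<Sum>g\<in>F. c g * g ! i)"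
  proof (intro allI impI)
    fix i
    have "(\<Sum>g\<in>S. ?c g * g ! i) = (\<Sum>g\<in>F. ?c g * g ! i)"
      using F assms by (intro sum.mono_neutral_right) auto
    also have "\<dots> = (\<Sum>g\<in>F. c g * g ! i)" by (intro sum.cong) auto
    finally show "(\<Sum>g\<in>S. ?c g * g ! i) = (\<Sum>g\<in>F. c g * g ! i)" .
  qed
  then show ?thesis using F by (intro exI[of _ ?c]) auto
qed

lemma lower_bound:
  fixes a m :: int and H :: "(nat \<Rightarrow> int) \<Rightarrow> int list"
  assumes a2: "a \<ge> 2"
    and S': "S' \<subseteq> splines m n l" "splines m n l \<subseteq> zspan m n S'" "finite S'"
    and H: "\<forall>x \<in> PiE {..<n} (\<lambda>_. {0..<a}). H x \<in> splines m n l"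
    and inj: "\<And>x y F. x \<in> PiE {..<n} (\<lambda>_. {0..<a}) \<Longrightarrow> y \<in> PiE {..<n} (\<lambda>_. {0..<a}) \<Longrightarrow>
        edgeok m n l F \<Longrightarrow> (\<forall>i<n. [H x ! i - H y ! i = a * F ! i] (mod m)) \<Longrightarrow> (\<forall>i<n. x i = y i)"
  shows "n \<le> card S'"
proof -
  let ?X = "PiE {..<n} (\<lambda>_. {0..<a})"
  have "\<forall>x\<in>?X. \<exists>c. \<forall>i<n. [H x ! i = (\<Sum>g\<in>S'. c g * g ! i)] (mod m)"
    using H S' zspan_sumS by blast
  then have "\<exists>C. \<forall>x\<in>?X. \<forall>i<n. [H x ! i = (\<Sum>g\<in>S'. C x g * g ! i)] (mod m)" by (rule bchoice)
  then obtain C where C: "\<forall>x\<in>?X. \<forall>i<n. [H x ! i = (\<Sum>g\<in>S'. C x g * g ! i)] (mod m)"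
    by blast
  define Phi where "Phi x = restrict (\<lambda>g. C x g mod a) S'" for x
  have "inj_on Phi ?X"
  proof (rule inj_onI)
    fix x y assume x: "x \<in> ?X" and y: "y \<in> ?X" and eq: "Phi x = Phi y"
    have md: "C x g mod a = C y g mod a" if "g \<in> S'" for g
      using fun_cong[OF eq, of g] that unfolding Phi_def by simp
    define t where "t g = (C x g - C y g) div a" for g
    have tt: "C x g - C y g = a * t g" if "g \<in> S'" for g
    proof -
      have "a dvd C x g - C y g" using md[OF that] mod_eq_dvd_iff by blast
      then show ?thesis unfolding t_def by simp
    qed
    define F where "F = map (\<lambda>i. \<Sum>g\<in>S'. t g * g ! i) [0..<n]"
    have Fi: "F ! i = (\<Sum>g\<in>S'. t g * g ! i)" if "i < n" for i using that unfolding F_def by simp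
    have eF: "edgeok m n l F"
      using S' Fi by (intro edgeok_comb[of S' _ _ _ _ t]) (auto simp: splines_iff)
    have "\<forall>i<n. [H x ! i - H y ! i = a * F ! i] (mod m)"
    proof (intro allI impI)
      fix i assume i: "i < n"
      have "[H x ! i - H y ! i = (\<Sum>g\<in>S'. C x g * g ! i) - (\<Sum>g\<in>S'. C y g * g ! i)] (mod m)"
        using C x y i by (intro cong_diff) auto
      also have "(\<Sum>g\<in>S'. C x g * g ! i) - (\<Sum>g\<in>S'. C y g * g ! i) = (\<Sum>g\<in>S'. (C x g - C y g) * g ! i)"
        by (simp add: sum_subtractf algebra_simps)
      also have "\<dots> = (\<Sum>g\<in>S'. a * (t g * g ! i))" using tt by (intro sum.cong) auto
      also have "\<dots> = a * F ! i" using Fi[OF i] by (simp add: sum_distrib_left)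
      finally show "[H x ! i - H y ! i = a * F ! i] (mod m)" .
    qed
    then have "\<forall>i<n. x i = y i" using inj[OF x y eF] by blast
    then show "x = y" using x y by (intro PiE_ext) auto
  qed
  moreover have "Phi ` ?X \<subseteq> PiE S' (\<lambda>_. {0..<a})"
  proof (rule image_subsetI)
    fix x show "Phi x \<in> PiE S' (\<lambda>_. {0..<a})"
      unfolding Phi_def restrict_PiE_iff using a2 by simp
  qed
  moreover have "finite (PiE S' (\<lambda>_. {0..<a}))"
    by (rule finite_PiE) (use S'(3) in auto)
  ultimately have "card ?X \<le> card (PiE S' (\<lambda>_. {0..<a}))"
    by (rule card_inj_on_le)
  then have "nat a ^ n \<le> nat a ^ card S'"
    using S'(3) by (simp add: card_PiE)
  then show ?thesis by (rule power_le_imp_le_exp[rotated]) (use a2 in auto)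
qed

lemma generic_final:
  assumes "S \<subseteq> splines m n l" "splines m n l \<subseteq> zspan m n S" "finite S" "card S = n"
    "\<forall>f\<in>S. \<exists>i. is_flow_up m n l i f"
    "\<And>S'. S' \<subseteq> splines m n l \<Longrightarrow> splines m n l \<subseteq> zspan m n S' \<Longrightarrow> finite S' \<Longrightarrow> n \<le> card S'"
  shows "is_min_flow_up_gen_set m n l S \<and> spline_rank m n l = n"
proof
  show "is_min_flow_up_gen_set m n l S"
    using assms unfolding is_min_flow_up_gen_set_def is_min_gen_set_def is_gen_set_def by auto
  show "spline_rank m n l = n"
    unfolding spline_rank_def
  proof (rule Least_equality)
    show "\<exists>S. is_gen_set m n l S \<and> finite S \<and> card S = n"
      using assms unfolding is_gen_set_def by blast
    show "\<And>y. \<exists>S. is_gen_set m n l S \<and> finite S \<and> card S = y \<Longrightarrow> n \<le> y"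
      using assms unfolding is_gen_set_def by blast
  qed
qed



definition coefS :: "int list \<Rightarrow> int \<Rightarrow> (nat \<Rightarrow> int) \<Rightarrow> nat set \<Rightarrow> (nat \<Rightarrow> int list) \<Rightarrow> int list \<Rightarrow> int" where
  "coefS u cu C J g v = (if v = u then cu else C (inv_into J g v))"

lemma comb_reindex:
  assumes "finite J" "inj_on g J" "u \<notin> g ` J"
  shows "(\<Sum>v\<in>insert u (g ` J). coefS u cu C J g v * v ! i) = cu * u ! i + (\<Sum>j\<in>J. C j * g j ! i)"
proof -
  have "(\<Sum>v\<in>insert u (g ` J). coefS u cu C J g v * v ! i) = cu * u ! i + (\<Sum>v\<in>g ` J. coefS u cu C J g v * v ! i)"
    using assms by (simp add: coefS_def)
  also have "(\<Sum>v\<in>g ` J. coefS u cu C J g v * v ! i) = (\<Sum>j\<in>J. coefS u cu C J g (g j) * g j ! i)"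
    using assms by (simp add: sum.reindex)
  also have "\<dots> = (\<Sum>j\<in>J. C j * g j ! i)"
    using assms by (intro sum.cong) (auto simp: coefS_def inv_into_f_f)
  finally show ?thesis .
qed

lemma make_zspan:
  fixes J :: "nat set"
  assumes "finite J" "inj_on g J" "u \<notin> g ` J" "f \<in> vec_mod m n"
    "\<forall>i<n. [f ! i = cu * u ! i + (\<Sum>j\<in>J. C j * g j ! i)] (mod m)"
  shows "f \<in> zspan m n (insert u (g ` J))"
  unfolding zspan_def using assms comb_reindex[OF assms(1-3)]
  by (intro CollectI conjI exI[of _ "insert u (g ` J)"] exI[of _ "coefS u cu C J g"]) auto

lemma comb_edgeok:
  fixes J :: "nat set"
  assumes "finite J" "inj_on g J" "u \<notin> g ` J" "edgeok m n l u" "\<forall>j\<in>J. edgeok m n l (g j)"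
    "\<forall>i<n. [f ! i = cu * u ! i + (\<Sum>j\<in>J. C j * g j ! i)] (mod m)"
  shows "edgeok m n l f"
  using assms comb_reindex[OF assms(1-3)]
  by (intro edgeok_comb[of "insert u (g ` J)" _ _ _ _ "coefS u cu C J g"]) auto

lemma card_gen:
  assumes "inj_on g {2..n}" "u \<notin> g ` {2..n}" "n \<ge> 2"
  shows "card (insert u (g ` {2..n})) = n" "finite (insert u (g ` {2..n}))"
  using assms by (simp_all add: card_image)

lemma edgeokD: "edgeok m n l f \<Longrightarrow> 1 \<le> j \<Longrightarrow> j < k \<Longrightarrow> k \<le> n \<Longrightarrow>
  \<exists>c. [f ! (j - 1) - f ! (k - 1) = c * l (r (k - 1) + j)] (mod m)"
  unfolding edgeok_def by blast

lemma cong_mod_diff: "[X mod m - Y mod m = Z] (mod m) \<Longrightarrow> [X - Y = (Z::int)] (mod m)"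
  by (simp add: cong_def mod_diff_eq)

lemma vec_mod_map: "(0::int) < m \<Longrightarrow> map (\<lambda>i. h i mod m) [0..<n] \<in> vec_mod m n"
  unfolding vec_mod_def by auto



lemma cong_flip: "[X - Y = c * L] (mod m) \<Longrightarrow> [Y = X + (- c) * L] (mod (m::int))"
proof -
  assume "[X - Y = c * L] (mod m)"
  then have "m dvd (X - Y - c * L)" by (simp add: cong_iff_dvd_diff)
  then have "m dvd - (X - Y - c * L)" by (simp only: dvd_minus_iff)
  moreover have eq: "Y - (X + (- c) * L) = - (X - Y - c * L)" by (simp add: algebra_simps)
  ultimately show ?thesis unfolding cong_iff_dvd_diff eq by simp
qed

lemma pow_facts:
  fixes a m :: int
  assumes "a > 1" "a ^ k dvd m" "m > 0" "x < k"
  shows "0 < a ^ x \<and> a ^ x < m \<and> a * a ^ x dvd m"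
proof -
  have "a ^ x < a ^ k" using assms power_strict_increasing by blast
  moreover have "a ^ k \<le> m" using assms zdvd_imp_le by blast
  moreover have "a * a ^ x dvd a ^ k"
    using assms le_imp_power_dvd[of "Suc x" k a] by simp
  moreover have "0 < a ^ x" using assms by simp
  ultimately show ?thesis using assms(2) dvd_trans by (meson order.strict_trans2)
qed

lemma part1:
  fixes m a :: int and k n :: nat and e :: "nat \<Rightarrow> nat"
  assumes m2: "m \<ge> 2" and a1: "a > 1" and akm: "a ^ k dvd m" and n2: "n \<ge> 2"
    and step: "\<forall>s. 1 \<le> s \<and> s < r n \<longrightarrow> a ^ e (s + 1) dvd a ^ e s" and e1k: "e 1 < k"
  shows "is_min_flow_up_gen_set m n (\<lambda>s. a ^ e s)
       ({replicate n (1 mod m)} \<union>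
        (\<lambda>j. map (\<lambda>t. if t = j - 1 then a ^ e (r (j - 1) + 1) mod m else 0) [0..<n]) ` {2..n})
     \<and> spline_rank m n (\<lambda>s. a ^ e s) = n"
proof -
  define l where "l = (\<lambda>s. a ^ e s)"
  define A where "A j = a ^ e (r (j - 1) + 1)" for j
  define g where "g j = map (\<lambda>t. if t = j - 1 then a ^ e (r (j - 1) + 1) mod m else 0) [0..<n]" for j
  define u where "u = replicate n (1 mod m)"
  have mpos: "m > 0" using m2 by simp
  have "\<forall>s. 1 \<le> s \<and> s < r n \<longrightarrow> e (s+1) \<le> e s" using step pow_dvd_le[OF a1] by blast
  note anti = antitone_from_step[OF this]
  have ek: "e s < k" if "1 \<le> s" "s \<le> r n" for s using anti[of 1 s] that e1k by simp
  have ldvd: "l t dvd a ^ e s" if "1 \<le> s" "s \<le> t" "t \<le> r n" for s t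
    using anti[OF that] by (simp add: l_def le_imp_power_dvd)
  have Aidx: "1 \<le> r (j-1) + 1 \<and> r (j-1) + 1 \<le> r n" if "2 \<le> j" "j \<le> n" for j
    using edge_idx[of 1 j n] that by simp
  have Aprop: "0 < A j \<and> A j < m \<and> a * A j dvd m" if "2 \<le> j" "j \<le> n" for j
    unfolding A_def using pow_facts[OF a1 akm mpos ek] Aidx[OF that] by blast
  have gnth: "g j ! i = (if i = j - 1 then A j else 0)" if "2 \<le> j" "j \<le> n" "i < n" for j i
  proof -
    have "a ^ e (r (j - 1) + 1) mod m = A j" using Aprop[OF that(1,2)] unfolding A_def by simp
    then show ?thesis using that(3) unfolding g_def by simp
  qed
  have unth: "u ! i = 1" if "i < n" for i using that m2 by (simp add: u_def)
  have ginj: "inj_on g {2..n}"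
  proof (rule inj_onI)
    fix x y assume x: "x \<in> {2..n}" and y: "y \<in> {2..n}" and eq: "g x = g y"
    have "g x ! (x - 1) = g y ! (x - 1)" using eq by simp
    then have "A x = (if x - 1 = y - 1 then A y else 0)" using x y gnth by auto
    then show "x = y" using Aprop[of x] x y by (auto split: if_splits)
  qed
  have unotin: "u \<notin> g ` {2..n}"
  proof
    assume "u \<in> g ` {2..n}"
    then obtain j where j: "j \<in> {2..n}" "u = g j" by blast
    then have "u ! 0 = g j ! 0" by simp
    then show False using j gnth[of j 0] unth[of 0] by auto
  qed
  have Seq: "{replicate n (1 mod m)} \<union>
        (\<lambda>j. map (\<lambda>t. if t = j - 1 then a ^ e (r (j - 1) + 1) mod m else 0) [0..<n]) ` {2..n}
      = insert u (g ` {2..n})" unfolding u_def g_def by simp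
  have edge_u: "edgeok m n l u"
    unfolding edgeok_def by (auto simp: unth intro!: exI[of _ 0])
  have edge_g: "edgeok m n l (g j)" if j: "2 \<le> j" "j \<le> n" for j
    unfolding edgeok_def
  proof (intro allI impI)
    fix i k assume ik: "1 \<le> i \<and> i < k \<and> k \<le> n"
    have idx: "1 \<le> r (k - 1) + i \<and> r (k - 1) + i \<le> r n" using edge_idx ik by blast
    have lt: "i - 1 < n" "k - 1 < n" "i - 1 \<noteq> k - 1" using ik by linarith+
    have gi: "g j ! (i - 1) = (if i = j then A j else 0)" using gnth[OF j lt(1)] ik j by auto
    have gk: "g j ! (k - 1) = (if k = j then A j else 0)" using gnth[OF j lt(2)] ik j by auto
    have "l (r (k - 1) + i) dvd g j ! (i - 1) - g j ! (k - 1)"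
    proof (cases "i = j")
      case True
      have "j - 1 \<le> k - 1" using ik True by (intro diff_le_mono) simp
      then have "r (j - 1) \<le> r (k - 1)" by (rule r_mono)
      then have "r (j - 1) + 1 \<le> r (k - 1) + i" using True ik by simp
      then have "l (r (k - 1) + i) dvd A j" unfolding A_def using ldvd idx Aidx[OF j] by blast
      then show ?thesis using True ik gi gk by simp
    next
      case False
      show ?thesis
      proof (cases "k = j")
        case True
        then have "l (r (k - 1) + i) dvd A j" unfolding A_def using ldvd idx Aidx[OF j] ik by simp
        then show ?thesis using True False gi gk by simp
      next
        case False2: False
        then show ?thesis using False gi gk by simp
      qed
    qed
    then show "\<exists>c. [g j ! (i - 1) - g j ! (k - 1) = c * l (r (k - 1) + i)] (mod m)"
      by (rule dvd_cong_ex)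
  qed
  have u_vec: "u \<in> vec_mod m n" unfolding vec_mod_def u_def using m2 by auto
  have g_vec: "g j \<in> vec_mod m n" for j unfolding vec_mod_def g_def using mpos by auto
  have sub: "insert u (g ` {2..n}) \<subseteq> splines m n l"
    using u_vec g_vec edge_u edge_g by (auto simp: splines_iff)
  have sum1: "(\<Sum>j\<in>{2..n}. C j * g j ! i) = (if i = 0 then 0 else C (i+1) * A (i+1))"
    if i: "i < n" for i C
  proof -
    have "(\<Sum>j\<in>{2..n}. C j * g j ! i) = (\<Sum>j\<in>{2..n}. if j = i + 1 then C j * A j else 0)"
      using i gnth by (intro sum.cong) auto
    also have "\<dots> = (if i = 0 then 0 else C (i+1) * A (i+1))" using i by simp
    finally show ?thesis .
  qed
  have gen: "splines m n l \<subseteq> zspan m n (insert u (g ` {2..n}))"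
  proof
    fix f assume f: "f \<in> splines m n l"
    have "\<forall>j\<in>{2..n}. \<exists>c. [f ! (j - 1) = f ! 0 + c * A j] (mod m)"
    proof
      fix j assume j: "j \<in> {2..n}"
      have ef: "edgeok m n l f" using f by (simp add: splines_iff)
      obtain c where "[f ! (1 - 1) - f ! (j - 1) = c * l (r (j - 1) + 1)] (mod m)"
        using edgeokD[OF ef, of 1 j] j by auto
      then have "[f ! (j - 1) = f ! 0 + (- c) * A j] (mod m)"
        by (intro cong_flip) (simp add: l_def A_def)
      then show "\<exists>c. [f ! (j - 1) = f ! 0 + c * A j] (mod m)" by blast
    qed
    then have "\<exists>C. \<forall>j\<in>{2..n}. [f ! (j - 1) = f ! 0 + C j * A j] (mod m)" by (rule bchoice)
    then obtain C where C: "\<forall>j\<in>{2..n}. [f ! (j - 1) = f ! 0 + C j * A j] (mod m)" by blast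
    have "\<forall>i<n. [f ! i = f ! 0 * u ! i + (\<Sum>j\<in>{2..n}. C j * g j ! i)] (mod m)"
    proof (intro allI impI)
      fix i assume i: "i < n"
      show "[f ! i = f ! 0 * u ! i + (\<Sum>j\<in>{2..n}. C j * g j ! i)] (mod m)"
      proof (cases "i = 0")
        case True then show ?thesis using i unth sum1 by simp
      next
        case False
        then have "i + 1 \<in> {2..n}" using i by simp
        then have "[f ! (i + 1 - 1) = f ! 0 + C (i+1) * A (i+1)] (mod m)" using C by blast
        then show ?thesis using False i unth sum1 by simp
      qed
    qed
    then show "f \<in> zspan m n (insert u (g ` {2..n}))"
      using f by (intro make_zspan ginj unotin) (auto simp: splines_iff)
  qed
  have flow: "\<forall>v\<in>insert u (g ` {2..n}). \<exists>i. is_flow_up m n l i v"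
  proof
    fix v assume v: "v \<in> insert u (g ` {2..n})"
    show "\<exists>i. is_flow_up m n l i v"
    proof (cases "v = u")
      case True
      then show ?thesis using sub unth[of 0] n2 unfolding is_flow_up_def
        by (intro exI[of _ 1]) auto
    next
      case False
      then obtain j where j: "j \<in> {2..n}" "v = g j" using v by blast
      have "is_flow_up m n l j v" unfolding is_flow_up_def
        using sub j gnth[of j] Aprop[of j] by auto
      then show ?thesis by blast
    qed
  qed
  define H where "H x = map (\<lambda>i. (x 0 + (if i = 0 then 0 else x i * A (i+1))) mod m) [0..<n]"
    for x :: "nat \<Rightarrow> int"
  have Hn: "H x ! i = (x 0 + (if i = 0 then 0 else x i * A (i+1))) mod m" if "i < n" for x i
    using that by (simp add: H_def)
  have Hspl: "H x \<in> splines m n l" for x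
  proof -
    have "\<forall>i<n. [H x ! i = x 0 * u ! i + (\<Sum>j\<in>{2..n}. x (j - 1) * g j ! i)] (mod m)"
    proof (intro allI impI)
      fix i assume i: "i < n"
      have eq: "x 0 * u ! i + (\<Sum>j\<in>{2..n}. x (j - 1) * g j ! i) = x 0 + (if i = 0 then 0 else x i * A (i+1))"
        using unth[OF i] sum1[OF i, of "\<lambda>j. x (j - 1)"] by simp
      show "[H x ! i = x 0 * u ! i + (\<Sum>j\<in>{2..n}. x (j - 1) * g j ! i)] (mod m)"
        unfolding Hn[OF i] eq by simp
    qed
    moreover have "\<forall>j\<in>{2..n}. edgeok m n l (g j)" using edge_g by simp
    ultimately have "edgeok m n l (H x)"
      by (intro comb_edgeok[OF finite_atLeastAtMost ginj unotin edge_u])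
    moreover have "H x \<in> vec_mod m n" unfolding H_def using mpos by (rule vec_mod_map)
    ultimately show ?thesis by (simp add: splines_iff)
  qed
  have "a dvd a ^ k" using e1k by (intro dvd_power) simp
  then have adm: "a dvd m" using akm by (rule dvd_trans)
  have lower: "n \<le> card S'" if S': "S' \<subseteq> splines m n l" "splines m n l \<subseteq> zspan m n S'" "finite S'" for S'
  proof (rule lower_bound[OF _ S', of a H])
    show "a \<ge> 2" using a1 by simp
    show "\<forall>x\<in>PiE {..<n} (\<lambda>_. {0..<a}). H x \<in> splines m n l" using Hspl by blast
    fix x y F
    assume x: "x \<in> PiE {..<n} (\<lambda>_. {0..<a})" and y: "y \<in> PiE {..<n} (\<lambda>_. {0..<a})"
      and eF: "edgeok m n l F" and cg: "\<forall>i<n. [H x ! i - H y ! i = a * F ! i] (mod m)"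
    have xb: "0 \<le> x i \<and> x i < a" "0 \<le> y i \<and> y i < a" if "i < n" for i
      using PiE_mem[OF x, of i] PiE_mem[OF y, of i] that by auto
    have c0: "[x 0 - y 0 = a * F ! 0] (mod m)"
      using cg[rule_format, of 0] n2 Hn[of 0] by (auto intro: cong_mod_diff)
    have x0: "x 0 = y 0"
      using key_cancel[of "x 0" "y 0" 1 a "F ! 0" m] c0 adm xb[of 0] n2 by simp
    show "\<forall>i<n. x i = y i"
    proof (intro allI impI)
      fix i assume i: "i < n"
      show "x i = y i"
      proof (cases "i = 0")
        case True then show ?thesis using x0 by simp
      next
        case False
        have ci: "[x 0 + x i * A (i+1) - (y 0 + y i * A (i+1)) = a * F ! i] (mod m)"
          using cg[rule_format, of i] i False Hn[of i] by (auto intro: cong_mod_diff)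
        have c0': "[0 = a * F ! 0] (mod m)" using c0 x0 by simp
        have "[(x 0 + x i * A (i+1) - (y 0 + y i * A (i+1))) - 0 = a * F ! i - a * F ! 0] (mod m)"
          using ci c0' by (rule cong_diff)
        then have d1: "[(x i - y i) * A (i+1) = a * F ! i - a * F ! 0] (mod m)"
          using x0 by (simp add: algebra_simps)
        obtain c where "[F ! (1 - 1) - F ! (i + 1 - 1) = c * l (r (i + 1 - 1) + 1)] (mod m)"
          using edgeokD[OF eF, of 1 "i+1"] i False by auto
        then have "[F ! 0 - F ! i = c * A (i+1)] (mod m)" by (simp add: l_def A_def)
        then have "[(- a) * (F ! 0 - F ! i) = (- a) * (c * A (i+1))] (mod m)" by (rule cong_scalar_left)
        then have "[a * F ! i - a * F ! 0 = a * (- c) * A (i+1)] (mod m)" by (simp add: algebra_simps)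
        with d1 have "[(x i - y i) * A (i+1) = a * (- c) * A (i+1)] (mod m)" by (rule cong_trans)
        then show ?thesis
          using key_cancel[of "x i" "y i" "A (i+1)" a "- c" m] Aprop[of "i+1"] i False xb[OF i] by simp
      qed
    qed
  qed
  show ?thesis
    unfolding Seq l_def[symmetric]
    using generic_final[OF sub gen card_gen(2)[OF ginj unotin n2] card_gen(1)[OF ginj unotin n2] flow lower]
    by blast
qed



lemma cong_neg: "[X - Y = c * L] (mod m) \<Longrightarrow> [Y - X = (- c) * L] (mod (m::int))"
proof -
  assume "[X - Y = c * L] (mod m)"
  then have "m dvd (X - Y - c * L)" by (simp add: cong_iff_dvd_diff)
  then have "m dvd - (X - Y - c * L)" by (simp only: dvd_minus_iff)
  moreover have eq: "Y - X - (- c) * L = - (X - Y - c * L)" by (simp add: algebra_simps)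
  ultimately show ?thesis unfolding cong_iff_dvd_diff eq by simp
qed

lemma cong_step:
  "[fi = f0 + S] (mod m) \<Longrightarrow> [fi1 - fi = T] (mod m) \<Longrightarrow> [fi1 = f0 + (S + T)] (mod (m::int))"
proof -
  assume h1: "[fi = f0 + S] (mod m)" and h2: "[fi1 - fi = T] (mod m)"
  have "m dvd (fi - (f0 + S)) + (fi1 - fi - T)"
    using h1 h2 unfolding cong_iff_dvd_diff by (rule dvd_add)
  moreover have eq: "(fi - (f0 + S)) + (fi1 - fi - T) = fi1 - (f0 + (S + T))" by simp
  ultimately have "m dvd fi1 - (f0 + (S + T))" by simp
  then show ?thesis unfolding cong_iff_dvd_diff .
qed

lemma part2:
  fixes m a :: int and k n :: nat and e :: "nat \<Rightarrow> nat"
  assumes m2: "m \<ge> 2" and a1: "a > 1" and akm: "a ^ k dvd m" and n2: "n \<ge> 2"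
    and step: "\<forall>s. 1 \<le> s \<and> s < r n \<longrightarrow> a ^ e s dvd a ^ e (s + 1)" and erk: "e (r n) < k"
  shows "is_min_flow_up_gen_set m n (\<lambda>s. a ^ e s)
       ({replicate n (1 mod m)} \<union>
        (\<lambda>j. map (\<lambda>t. if t < j - 1 then 0 else a ^ e (r n - (n - j)) mod m) [0..<n]) ` {2..n})
     \<and> spline_rank m n (\<lambda>s. a ^ e s) = n"
proof -
  define l where "l = (\<lambda>s. a ^ e s)"
  define B where "B j = a ^ e (r (n - 1) + j - 1)" for j
  define g where "g j = map (\<lambda>t. if t < j - 1 then 0 else a ^ e (r n - (n - j)) mod m) [0..<n]" for j
  define u where "u = replicate n (1 mod m)"
  have mpos: "m > 0" using m2 by simp
  have "\<forall>s. 1 \<le> s \<and> s < r n \<longrightarrow> e s \<le> e (s+1)" using step pow_dvd_le[OF a1] by blast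
  note mon = mono_from_step[OF this]
  have rn: "r n = r (n - 1) + (n - 1)" using r_pred n2 by simp
  have ek: "e s < k" if "1 \<le> s" "s \<le> r n" for s using mon[of s "r n"] that erk by simp
  have ldvd: "l s dvd a ^ e t" if "1 \<le> s" "s \<le> t" "t \<le> r n" for s t
    using mon[OF that] by (simp add: l_def le_imp_power_dvd)
  have Bidx: "1 \<le> r (n - 1) + j - 1 \<and> r (n - 1) + j - 1 \<le> r n" if "2 \<le> j" "j \<le> n" for j
    using rn that by linarith
  have Beq: "r n - (n - j) = r (n - 1) + j - 1" if "2 \<le> j" "j \<le> n" for j
    using rn that by linarith
  have Bprop: "0 < B j \<and> B j < m \<and> a * B j dvd m" if "2 \<le> j" "j \<le> n" for j
    unfolding B_def using pow_facts[OF a1 akm mpos ek] Bidx[OF that] by blast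
  have gnth: "g j ! i = (if i < j - 1 then 0 else B j)" if "2 \<le> j" "j \<le> n" "i < n" for j i
  proof -
    have h: "a ^ e (r n - (n - j)) mod m = B j" using Bprop[OF that(1,2)] Beq[OF that(1,2)] unfolding B_def by simp
    show ?thesis using that(3) unfolding g_def h by simp
  qed
  have unth: "u ! i = 1" if "i < n" for i using that m2 by (simp add: u_def)
  have ginj: "inj_on g {2..n}"
  proof (rule inj_onI)
    fix x y assume x: "x \<in> {2..n}" and y: "y \<in> {2..n}" and eq: "g x = g y"
    have "g x ! (x - 1) = g y ! (x - 1)" "g x ! (y - 1) = g y ! (y - 1)" using eq by simp_all
    then have "B x = (if x - 1 < y - 1 then 0 else B y)" "(if y - 1 < x - 1 then 0 else B x) = B y"
      using x y gnth by auto
    then show "x = y" using Bprop[of x] Bprop[of y] x y by (auto split: if_splits)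
  qed
  have unotin: "u \<notin> g ` {2..n}"
  proof
    assume "u \<in> g ` {2..n}"
    then obtain j where j: "j \<in> {2..n}" "u = g j" by blast
    then have "u ! 0 = g j ! 0" by simp
    then show False using j gnth[of j 0] unth[of 0] by auto
  qed
  have Seq: "{replicate n (1 mod m)} \<union>
        (\<lambda>j. map (\<lambda>t. if t < j - 1 then 0 else a ^ e (r n - (n - j)) mod m) [0..<n]) ` {2..n}
      = insert u (g ` {2..n})" unfolding u_def g_def by simp
  have edge_u: "edgeok m n l u"
    unfolding edgeok_def by (auto simp: unth intro!: exI[of _ 0])
  have edge_g: "edgeok m n l (g j)" if j: "2 \<le> j" "j \<le> n" for j
    unfolding edgeok_def
  proof (intro allI impI)
    fix i k assume ik: "1 \<le> i \<and> i < k \<and> k \<le> n"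
    have idx: "1 \<le> r (k - 1) + i \<and> r (k - 1) + i \<le> r n" using edge_idx ik by blast
    have lt: "i - 1 < n" "k - 1 < n" using ik by linarith+
    have gi: "g j ! (i - 1) = (if i < j then 0 else B j)" using gnth[OF j lt(1)] ik j by auto
    have gk: "g j ! (k - 1) = (if k < j then 0 else B j)" using gnth[OF j lt(2)] ik j by auto
    have "l (r (k - 1) + i) dvd g j ! (i - 1) - g j ! (k - 1)"
    proof (cases "i < j \<and> \<not> k < j")
      case True
      have "k - 1 \<le> n - 1" using ik by (intro diff_le_mono) simp
      then have "r (k - 1) \<le> r (n - 1)" by (rule r_mono)
      then have "r (k - 1) + i \<le> r (n - 1) + j - 1" using True ik by linarith
      then have "l (r (k - 1) + i) dvd B j" unfolding B_def using ldvd idx Bidx[OF j] by blast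
      then show ?thesis using True gi gk by simp
    next
      case False
      then have "g j ! (i - 1) - g j ! (k - 1) = 0" using gi gk ik by auto
      then show ?thesis by simp
    qed
    then show "\<exists>c. [g j ! (i - 1) - g j ! (k - 1) = c * l (r (k - 1) + i)] (mod m)"
      by (rule dvd_cong_ex)
  qed
  have chain2: "\<exists>c. [F ! i - F ! (i - 1) = c * B (i + 1)] (mod m)"
    if eF: "edgeok m n l F" and i: "1 \<le> i" "i < n" for F i
  proof -
    obtain c1 where c1: "[F ! (i - 1) - F ! (n - 1) = c1 * l (r (n - 1) + i)] (mod m)"
      using edgeokD[OF eF, of i n] i by auto
    have lB: "l (r (n - 1) + i) = B (i + 1)" by (simp add: l_def B_def)
    have c1': "[F ! (n - 1) - F ! (i - 1) = (- c1) * B (i + 1)] (mod m)"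
      using cong_neg[OF c1] lB by simp
    show ?thesis
    proof (cases "i + 1 = n")
      case True
      then have "n - 1 = i" by simp
      then show ?thesis using c1' by (intro exI[of _ "- c1"]) simp
    next
      case False
      then have i1: "i + 1 < n" using i by simp
      obtain c2 where c2: "[F ! (i + 1 - 1) - F ! (n - 1) = c2 * l (r (n - 1) + (i + 1))] (mod m)"
        using edgeokD[OF eF, of "i + 1" n] i1 by auto
      have "B (i + 1) dvd l (r (n - 1) + (i + 1))"
        unfolding B_def l_def using mon[of "r (n - 1) + i" "r (n - 1) + (i + 1)"] i1 rn i
        by (simp add: le_imp_power_dvd)
      then obtain q where q: "l (r (n - 1) + (i + 1)) = B (i + 1) * q" by (auto simp: dvd_def)
      have "[(F ! i - F ! (n - 1)) + (F ! (n - 1) - F ! (i - 1)) = c2 * (B (i + 1) * q) + (- c1) * B (i + 1)] (mod m)"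
        using c2 c1' q by (intro cong_add) simp_all
      then have "[F ! i - F ! (i - 1) = (c2 * q - c1) * B (i + 1)] (mod m)"
        by (simp add: algebra_simps)
      then show ?thesis by blast
    qed
  qed
  have u_vec: "u \<in> vec_mod m n" unfolding vec_mod_def u_def using m2 by auto
  have g_vec: "g j \<in> vec_mod m n" for j unfolding vec_mod_def g_def using mpos by auto
  have sub: "insert u (g ` {2..n}) \<subseteq> splines m n l"
    using u_vec g_vec edge_u edge_g by (auto simp: splines_iff)
  have sum2: "(\<Sum>j\<in>{2..n}. C j * g j ! i) = (\<Sum>j\<in>{2..i+1}. C j * B j)"
    if i: "i < n" for i C
  proof -
    have "(\<Sum>j\<in>{2..n}. C j * g j ! i) = (\<Sum>j\<in>{2..n}. if j \<le> i + 1 then C j * B j else 0)"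
      using i gnth by (intro sum.cong) auto
    also have "\<dots> = (\<Sum>j\<in>{j\<in>{2..n}. j \<le> i + 1}. C j * B j)"
      by (rule sum.inter_filter[symmetric]) simp
    also have "{j\<in>{2..n}. j \<le> i + 1} = {2..i+1}" using i by auto
    finally show ?thesis .
  qed
  have sumS: "(\<Sum>j\<in>{2..i+1}. X j) = (\<Sum>j\<in>{2..i}. X j) + X (i + 1)" if "1 \<le> i" for i and X :: "nat \<Rightarrow> int"
    using that by (simp add: add.commute)
  have gen: "splines m n l \<subseteq> zspan m n (insert u (g ` {2..n}))"
  proof
    fix f assume f: "f \<in> splines m n l"
    have ef: "edgeok m n l f" using f by (simp add: splines_iff)
    have "\<forall>j\<in>{2..n}. \<exists>c. [f ! (j - 1) - f ! (j - 2) = c * B j] (mod m)"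
    proof
      fix j assume j: "j \<in> {2..n}"
      have jj: "1 \<le> j - 1" "j - 1 < n" using j by auto
      obtain c where "[f ! (j - 1) - f ! (j - 1 - 1) = c * B (j - 1 + 1)] (mod m)"
        using chain2[OF ef jj] by blast
      then show "\<exists>c. [f ! (j - 1) - f ! (j - 2) = c * B j] (mod m)" using j
        by (intro exI[of _ c]) (simp add: numeral_2_eq_2)
    qed
    then have "\<exists>C. \<forall>j\<in>{2..n}. [f ! (j - 1) - f ! (j - 2) = C j * B j] (mod m)" by (rule bchoice)
    then obtain C where C: "\<forall>j\<in>{2..n}. [f ! (j - 1) - f ! (j - 2) = C j * B j] (mod m)" by blast
    have ind: "i < n \<longrightarrow> [f ! i = f ! 0 + (\<Sum>j\<in>{2..i+1}. C j * B j)] (mod m)" for i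
    proof (induction i)
      case 0 then show ?case by simp
    next
      case (Suc i)
      show ?case
      proof
        assume i: "Suc i < n"
        have "Suc i + 1 \<in> {2..n}" using i by simp
        then have st: "[f ! (Suc i) - f ! i = C (Suc i + 1) * B (Suc i + 1)] (mod m)"
          using C by fastforce
        have "[f ! Suc i = f ! 0 + ((\<Sum>j\<in>{2..i+1}. C j * B j) + C (Suc i + 1) * B (Suc i + 1))] (mod m)"
          using Suc.IH i st by (intro cong_step[of "f ! i"]) simp_all
        then show "[f ! Suc i = f ! 0 + (\<Sum>j\<in>{2..Suc i+1}. C j * B j)] (mod m)"
          using sumS[of "Suc i" "\<lambda>j. C j * B j"] by simp
      qed
    qed
    have "\<forall>i<n. [f ! i = f ! 0 * u ! i + (\<Sum>j\<in>{2..n}. C j * g j ! i)] (mod m)"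
      using ind unth sum2 by simp
    then show "f \<in> zspan m n (insert u (g ` {2..n}))"
      using f by (intro make_zspan ginj unotin) (auto simp: splines_iff)
  qed
  have flow: "\<forall>v\<in>insert u (g ` {2..n}). \<exists>i. is_flow_up m n l i v"
  proof
    fix v assume v: "v \<in> insert u (g ` {2..n})"
    show "\<exists>i. is_flow_up m n l i v"
    proof (cases "v = u")
      case True
      then show ?thesis using sub unth[of 0] n2 unfolding is_flow_up_def
        by (intro exI[of _ 1]) auto
    next
      case False
      then obtain j where j: "j \<in> {2..n}" "v = g j" using v by blast
      have "is_flow_up m n l j v" unfolding is_flow_up_def
        using sub j gnth[of j] Bprop[of j] by auto
      then show ?thesis by blast
    qed
  qed
  define H where "H x = map (\<lambda>i. (x 0 + (\<Sum>j\<in>{2..i+1}. x (j - 1) * B j)) mod m) [0..<n]"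
    for x :: "nat \<Rightarrow> int"
  have Hn: "H x ! i = (x 0 + (\<Sum>j\<in>{2..i+1}. x (j - 1) * B j)) mod m" if "i < n" for x i
    using that by (simp add: H_def)
  have Hspl: "H x \<in> splines m n l" for x
  proof -
    have "\<forall>i<n. [H x ! i = x 0 * u ! i + (\<Sum>j\<in>{2..n}. x (j - 1) * g j ! i)] (mod m)"
    proof (intro allI impI)
      fix i assume i: "i < n"
      have eq: "x 0 * u ! i + (\<Sum>j\<in>{2..n}. x (j - 1) * g j ! i) = x 0 + (\<Sum>j\<in>{2..i+1}. x (j - 1) * B j)"
        using unth[OF i] sum2[OF i, of "\<lambda>j. x (j - 1)"] by simp
      show "[H x ! i = x 0 * u ! i + (\<Sum>j\<in>{2..n}. x (j - 1) * g j ! i)] (mod m)"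
        unfolding Hn[OF i] eq by simp
    qed
    moreover have "\<forall>j\<in>{2..n}. edgeok m n l (g j)" using edge_g by simp
    ultimately have "edgeok m n l (H x)"
      by (intro comb_edgeok[OF finite_atLeastAtMost ginj unotin edge_u])
    moreover have "H x \<in> vec_mod m n" unfolding H_def using mpos by (rule vec_mod_map)
    ultimately show ?thesis by (simp add: splines_iff)
  qed
  have "a dvd a ^ k" using erk by (intro dvd_power) simp
  then have adm: "a dvd m" using akm by (rule dvd_trans)
  have lower: "n \<le> card S'" if S': "S' \<subseteq> splines m n l" "splines m n l \<subseteq> zspan m n S'" "finite S'" for S'
  proof (rule lower_bound[OF _ S', of a H])
    show "a \<ge> 2" using a1 by simp
    show "\<forall>x\<in>PiE {..<n} (\<lambda>_. {0..<a}). H x \<in> splines m n l" using Hspl by blast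
    fix x y F
    assume x: "x \<in> PiE {..<n} (\<lambda>_. {0..<a})" and y: "y \<in> PiE {..<n} (\<lambda>_. {0..<a})"
      and eF: "edgeok m n l F" and cg: "\<forall>i<n. [H x ! i - H y ! i = a * F ! i] (mod m)"
    have xb: "0 \<le> x i \<and> x i < a" "0 \<le> y i \<and> y i < a" if "i < n" for i
      using PiE_mem[OF x, of i] PiE_mem[OF y, of i] that by auto
    have c0: "[x 0 - y 0 = a * F ! 0] (mod m)"
      using cg[rule_format, of 0] n2 Hn[of 0] by (auto intro: cong_mod_diff)
    have x0: "x 0 = y 0"
      using key_cancel[of "x 0" "y 0" 1 a "F ! 0" m] c0 adm xb[of 0] n2 by simp
    show "\<forall>i<n. x i = y i"
    proof (intro allI impI)
      fix i assume i: "i < n"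
      show "x i = y i"
      proof (cases "i = 0")
        case True then show ?thesis using x0 by simp
      next
        case False
        then have i1: "1 \<le> i" by simp
        define SX where "SX = (\<Sum>j\<in>{2..i}. x (j - 1) * B j)"
        define SY where "SY = (\<Sum>j\<in>{2..i}. y (j - 1) * B j)"
        have ci: "[(x 0 + (SX + x i * B (i + 1))) - (y 0 + (SY + y i * B (i + 1))) = a * F ! i] (mod m)"
          using cg[rule_format, OF i] Hn[OF i, of x] Hn[OF i, of y] sumS[OF i1, of "\<lambda>j. x (j - 1) * B j"]
            sumS[OF i1, of "\<lambda>j. y (j - 1) * B j"]
          unfolding SX_def SY_def by (auto intro: cong_mod_diff)
        have i': "i - 1 < n" "i - 1 + 1 = i" using i False by auto
        have cim: "[(x 0 + SX) - (y 0 + SY) = a * F ! (i - 1)] (mod m)"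
          using cg[rule_format, OF i'(1)] Hn[OF i'(1), of x] Hn[OF i'(1), of y] i'(2)
          unfolding SX_def SY_def by (auto intro: cong_mod_diff)
        have "[(x 0 + (SX + x i * B (i + 1))) - (y 0 + (SY + y i * B (i + 1))) - ((x 0 + SX) - (y 0 + SY))
            = a * F ! i - a * F ! (i - 1)] (mod m)"
          using ci cim by (rule cong_diff)
        then have d1: "[(x i - y i) * B (i + 1) = a * F ! i - a * F ! (i - 1)] (mod m)"
          by (simp add: algebra_simps)
        obtain c where "[F ! i - F ! (i - 1) = c * B (i + 1)] (mod m)"
          using chain2[OF eF i1 i] by blast
        then have "[a * (F ! i - F ! (i - 1)) = a * (c * B (i + 1))] (mod m)" by (rule cong_scalar_left)
        then have "[a * F ! i - a * F ! (i - 1) = a * c * B (i + 1)] (mod m)" by (simp add: algebra_simps)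
        with d1 have "[(x i - y i) * B (i + 1) = a * c * B (i + 1)] (mod m)" by (rule cong_trans)
        then show ?thesis
          using key_cancel[of "x i" "y i" "B (i + 1)" a c m] Bprop[of "i + 1"] i False xb[OF i] by simp
      qed
    qed
  qed
  show ?thesis
    unfolding Seq l_def[symmetric]
    using generic_final[OF sub gen card_gen(2)[OF ginj unotin n2] card_gen(1)[OF ginj unotin n2] flow lower]
    by blast
qed

theorem mainTheorem5:
  fixes m a :: int and k n :: nat and e :: "nat \<Rightarrow> nat"
  assumes "0 < m" and "a > 1" and "zero_divisor_mod m a"
    and "k \<ge> 1" and "a ^ k dvd m" and "n \<ge> 2"
  defines "l \<equiv> (\<lambda>s. a ^ e s)"
  shows
   "((\<forall>s. 1 \<le> s \<and> s < r n \<longrightarrow> a ^ e (s + 1) dvd a ^ e s) \<and> a ^ e 1 dvd a ^ k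
       \<and> e (r n) \<ge> 1 \<and> e 1 < k \<longrightarrow>
     is_min_flow_up_gen_set m n l
       ({replicate n (1 mod m)} \<union>
        (\<lambda>j. map (\<lambda>t. if t = j - 1 then a ^ e (r (j - 1) + 1) mod m else 0) [0..<n]) ` {2..n})
     \<and> spline_rank m n l = n)
  \<and> ((\<forall>s. 1 \<le> s \<and> s < r n \<longrightarrow> a ^ e s dvd a ^ e (s + 1)) \<and> a ^ e (r n) dvd a ^ k
       \<and> e 1 \<ge> 1 \<and> e (r n) < k \<longrightarrow>
     is_min_flow_up_gen_set m n l
       ({replicate n (1 mod m)} \<union>
        (\<lambda>j. map (\<lambda>t. if t < j - 1 then 0 else a ^ e (r n - (n - j)) mod m) [0..<n]) ` {2..n})
     \<and> spline_rank m n l = n)"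
proof -
  have m2: "m \<ge> 2"
  proof (rule ccontr)
    assume "\<not> m \<ge> 2"
    then have "m = 1" using assms(1) by simp
    then have "[a = 0] (mod m)" by (simp add: cong_def)
    then show False using assms(3) unfolding zero_divisor_mod_def by blast
  qed
  show ?thesis unfolding l_def
  proof (intro conjI impI)
    assume h: "(\<forall>s. 1 \<le> s \<and> s < r n \<longrightarrow> a ^ e (s + 1) dvd a ^ e s) \<and> a ^ e 1 dvd a ^ k
       \<and> e (r n) \<ge> 1 \<and> e 1 < k"
    show "is_min_flow_up_gen_set m n (\<lambda>s. a ^ e s)
       ({replicate n (1 mod m)} \<union>
        (\<lambda>j. map (\<lambda>t. if t = j - 1 then a ^ e (r (j - 1) + 1) mod m else 0) [0..<n]) ` {2..n})"
      using part1[OF m2 assms(2) assms(5) assms(6)] h by blast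
    show "spline_rank m n (\<lambda>s. a ^ e s) = n"
      using part1[OF m2 assms(2) assms(5) assms(6)] h by blast
  next
    assume h: "(\<forall>s. 1 \<le> s \<and> s < r n \<longrightarrow> a ^ e s dvd a ^ e (s + 1)) \<and> a ^ e (r n) dvd a ^ k
       \<and> e 1 \<ge> 1 \<and> e (r n) < k"
    show "is_min_flow_up_gen_set m n (\<lambda>s. a ^ e s)
       ({replicate n (1 mod m)} \<union>
        (\<lambda>j. map (\<lambda>t. if t < j - 1 then 0 else a ^ e (r n - (n - j)) mod m) [0..<n]) ` {2..n})"
      using part2[OF m2 assms(2) assms(5) assms(6)] h by blast
    show "spline_rank m n (\<lambda>s. a ^ e s) = n"
      using part2[OF m2 assms(2) assms(5) assms(6)] h by blast
  qed
qed

end
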